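(* Let $\nu$ be a Borel probability measure on $\operatorname{Hom}(\mathbb{S}^1)$ such that $\Gamma_\nu$ is proximal and does not fix any point in $\mathbb{S}^1$, and let $\eta$ be the (unique) $\nu$-stationary probability measure. Then there exist a sequence $(g_n)_{n\in\mathbb{N}}$ in $\Gamma_\nu$ and a point $z\in\mathbb{S}^1$ such that $(g_n)_*\eta\to\delta_z$ in the weak-$*$ topology.
   Context: $\mathbb{S}^1=\mathbb{R}/\mathbb{Z}$ with usual metric $d$; $\operatorname{Hom}(\mathbb{S}^1)$ is the group of all homeomorphisms of $\mathbb{S}^1$. $X_\nu$ is the topological support of $\nu$, and $\Gamma_\nu$ is the semigroup generated by $X_\nu$, here taken to contain the identity. $\Gamma_\nu$ is proximal if for all $x,y$ there exists $(g_n)$ in $\Gamma_\nu$ with $d(g_n(x),g_n(y))\to0$; it does not fix any point if there is no $x$ with $f(x)=x$ for all $f\in\Gamma_\nu$. A probability measure $\eta$ is $\nu$-stationary if $\eta=\int_{X_\nu}f_*\eta\,d\nu(f)$. *)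

theory Defs
  imports "HOL-Probability.Probability"
begin

definition S1 :: "complex set" where
  "S1 = sphere 0 1"

text \<open>Homeomorphisms of S^1, as maps complex => complex that are the identity
  off the circle (so that each homeomorphism has a unique representative).\<close>
definition HomS1 :: "(complex \<Rightarrow> complex) set" where
  "HomS1 = {f. (\<exists>g. homeomorphism S1 S1 f g) \<and> (\<forall>x. x \<notin> S1 \<longrightarrow> f x = x)}"

definition udist :: "(complex \<Rightarrow> complex) \<Rightarrow> (complex \<Rightarrow> complex) \<Rightarrow> real" where
  "udist f g = (SUP x\<in>S1. dist (f x) (g x))"

definition HomS1_top :: "(complex \<Rightarrow> complex) topology" where
  "HomS1_top = topology (\<lambda>U. U \<subseteq> HomS1 \<and>
      (\<forall>f\<in>U. \<exists>e>0. \<forall>g\<in>HomS1. udist f g < e \<longrightarrow> g \<in> U))"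

definition HomS1_borel :: "(complex \<Rightarrow> complex) measure" where
  "HomS1_borel = sigma HomS1 {U. openin HomS1_top U}"

definition S1_borel :: "complex measure" where
  "S1_borel = restrict_space borel S1"

definition supp :: "(complex \<Rightarrow> complex) measure \<Rightarrow> (complex \<Rightarrow> complex) set" where
  "supp \<nu> = {f \<in> HomS1. \<forall>U. openin HomS1_top U \<and> f \<in> U \<longrightarrow> emeasure \<nu> U > 0}"

inductive_set Gamma_nu :: "(complex \<Rightarrow> complex) measure \<Rightarrow> (complex \<Rightarrow> complex) set"
  for \<nu> where
  Gamma_nu_id: "id \<in> Gamma_nu \<nu>"
| Gamma_nu_comp: "f \<in> supp \<nu> \<Longrightarrow> g \<in> Gamma_nu \<nu> \<Longrightarrow> f \<circ> g \<in> Gamma_nu \<nu>"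

definition proximal :: "(complex \<Rightarrow> complex) set \<Rightarrow> bool" where
  "proximal G \<longleftrightarrow> (\<forall>x\<in>S1. \<forall>y\<in>S1. \<exists>g::nat \<Rightarrow> complex \<Rightarrow> complex.
      (\<forall>n. g n \<in> G) \<and> (\<lambda>n. dist (g n x) (g n y)) \<longlonglongrightarrow> 0)"

definition fixes_point :: "(complex \<Rightarrow> complex) set \<Rightarrow> bool" where
  "fixes_point G \<longleftrightarrow> (\<exists>x\<in>S1. \<forall>f\<in>G. f x = x)"

definition stationary :: "(complex \<Rightarrow> complex) measure \<Rightarrow> complex measure \<Rightarrow> bool" where
  "stationary \<nu> \<eta> \<longleftrightarrow> (\<forall>A\<in>sets S1_borel.
      emeasure \<eta> A = (\<integral>\<^sup>+ f. emeasure \<eta> (f -` A \<inter> space \<eta>) \<partial>\<nu>))"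

definition weak_star_to_dirac :: "(nat \<Rightarrow> complex measure) \<Rightarrow> complex \<Rightarrow> bool" where
  "weak_star_to_dirac \<mu> z \<longleftrightarrow> (\<forall>\<phi>::complex \<Rightarrow> real. continuous_on S1 \<phi> \<longrightarrow>
      (\<lambda>n. \<integral>x. \<phi> x \<partial>(\<mu> n)) \<longlonglongrightarrow> \<phi> z)"

end

theory Submission
  imports Defs
begin


lemma HomS1_comp: "f \<in> HomS1 \<Longrightarrow> g \<in> HomS1 \<Longrightarrow> f \<circ> g \<in> HomS1"
  unfolding HomS1_def
proof (clarsimp)
  fix f' g'
  assume "homeomorphism S1 S1 f f'" "homeomorphism S1 S1 g g'" "\<forall>x. x \<notin> S1 \<longrightarrow> f x = x" "\<forall>x. x \<notin> S1 \<longrightarrow> g x = x"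
  then show "(\<exists>h. homeomorphism S1 S1 (f \<circ> g) h)"
    using homeomorphism_compose by blast
qed

lemma id_HomS1: "id \<in> HomS1"
  unfolding HomS1_def using homeomorphism_ident[of S1] by (auto simp: id_def)

lemma supp_HomS1: "supp \<nu> \<subseteq> HomS1" unfolding supp_def by auto

lemma Gamma_HomS1: "f \<in> Gamma_nu \<nu> \<Longrightarrow> f \<in> HomS1"
proof (induction rule: Gamma_nu.induct)
  case Gamma_nu_id
  then show ?case by (rule id_HomS1)
next
  case (Gamma_nu_comp f g)
  then show ?case using supp_HomS1 HomS1_comp by blast
qed

lemma Gamma_comp: "f \<in> Gamma_nu \<nu> \<Longrightarrow> g \<in> Gamma_nu \<nu> \<Longrightarrow> f \<circ> g \<in> Gamma_nu \<nu>"
proof (induction rule: Gamma_nu.induct)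
  case Gamma_nu_id
  then show ?case by simp
next
  case (Gamma_nu_comp f h)
  then show ?case by (metis Gamma_nu.Gamma_nu_comp comp_assoc)
qed

lemma HomS1_props:
  assumes "f \<in> HomS1"
  shows "continuous_on S1 f" "f ` S1 = S1" "\<exists>g. homeomorphism S1 S1 f g"
  using assms unfolding HomS1_def homeomorphism_def by auto

lemma S1_compact: "compact S1" unfolding S1_def by simp



lemma one_S1: "1 \<in> S1" unfolding S1_def by simp

lemma finite_prox:
  assumes prox: "proximal G" and Gsub: "G \<subseteq> HomS1"
    and Gcomp: "\<And>f g. f\<in>G \<Longrightarrow> g\<in>G \<Longrightarrow> f \<circ> g \<in> G" and idG: "id \<in> G"
    and fin: "finite F" and FS: "F \<subseteq> S1"
  shows "\<forall>\<delta>>0. \<exists>h\<in>G. \<exists>c\<in>S1. \<forall>u\<in>F. dist (h u) c < \<delta>"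
  using fin FS
proof (induction F rule: finite_induct)
  case empty
  then show ?case using idG one_S1 by blast
next
  case (insert x F)
  have xS: "x \<in> S1" and FS: "F \<subseteq> S1" using insert.prems by auto
  have IH: "\<forall>\<delta>>0. \<exists>h\<in>G. \<exists>c\<in>S1. \<forall>u\<in>F. dist (h u) c < \<delta>"
    using insert.IH FS by blast
  show ?case
  proof (intro allI impI)
    fix \<delta> :: real assume dpos: "\<delta> > 0"
    have "\<forall>n. \<exists>h\<in>G. \<exists>c\<in>S1. \<forall>u\<in>F. dist (h u) c < 1 / Suc n"
    proof
      fix n
      have "(1::real) / Suc n > 0" by simp
      then show "\<exists>h\<in>G. \<exists>c\<in>S1. \<forall>u\<in>F. dist (h u) c < 1 / Suc n"
        using IH by blast
    qed
    then have "\<forall>n. \<exists>h. h \<in> G \<and> (\<exists>c. c \<in> S1 \<and> (\<forall>u\<in>F. dist (h u) c < 1 / Suc n))"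
      by blast
    then obtain H where H: "\<forall>n. H n \<in> G \<and> (\<exists>c. c \<in> S1 \<and> (\<forall>u\<in>F. dist (H n u) c < 1 / Suc n))"
      using choice[of "\<lambda>n h. h \<in> G \<and> (\<exists>c. c \<in> S1 \<and> (\<forall>u\<in>F. dist (h u) c < 1 / Suc n))"] by blast
    then obtain C where C: "\<forall>n. C n \<in> S1 \<and> (\<forall>u\<in>F. dist (H n u) (C n) < 1 / Suc n)"
      using choice[of "\<lambda>n c. c \<in> S1 \<and> (\<forall>u\<in>F. dist (H n u) c < 1 / Suc n)"] by blast
    have HG: "\<And>n. H n \<in> G" and CS: "\<And>n. C n \<in> S1"
      and HC: "\<And>n u. u \<in> F \<Longrightarrow> dist (H n u) (C n) < 1 / Suc n"
      using H C by auto
    have HS: "\<And>n y. y \<in> S1 \<Longrightarrow> H n y \<in> S1"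
      using HomS1_props(2)[OF subsetD[OF Gsub HG]] by blast
    have sc: "seq_compact (S1 \<times> S1)"
      by (rule compact_imp_seq_compact[OF compact_Times[OF S1_compact S1_compact]])
    have inS: "\<And>n. (C n, H n x) \<in> S1 \<times> S1" using CS HS xS by auto
    have "\<exists>l\<in>S1 \<times> S1. \<exists>r. strict_mono r \<and> ((\<lambda>n. (C n, H n x)) \<circ> r) \<longlonglongrightarrow> l"
      by (rule sc[unfolded seq_compact_def, rule_format, of "\<lambda>n. (C n, H n x)", OF inS])
    then obtain l r where lS: "l \<in> S1 \<times> S1" and r: "strict_mono r"
      and lim: "((\<lambda>n. (C n, H n x)) \<circ> r) \<longlonglongrightarrow> l"
      by blast
    define a where "a = fst l"
    define b where "b = snd l"
    have aS: "a \<in> S1" and bS: "b \<in> S1" using lS a_def b_def by auto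
    have la: "(\<lambda>n. C (r n)) \<longlonglongrightarrow> a"
      using tendsto_fst[OF lim] unfolding a_def by (simp add: o_def)
    have lb: "(\<lambda>n. H (r n) x) \<longlonglongrightarrow> b"
      using tendsto_snd[OF lim] unfolding b_def by (simp add: o_def)
    have "\<exists>gs::nat \<Rightarrow> complex \<Rightarrow> complex. (\<forall>n. gs n \<in> G) \<and> (\<lambda>n. dist (gs n a) (gs n b)) \<longlonglongrightarrow> 0"
      using prox aS bS unfolding proximal_def by blast
    then obtain gs where gsG: "\<And>n. gs n \<in> G" and gsl: "(\<lambda>n. dist (gs n a) (gs n b)) \<longlonglongrightarrow> 0"
      by blast
    obtain k where gk: "dist (gs k a) (gs k b) < \<delta>/2"
    proof -
      have "\<exists>no. \<forall>n\<ge>no. dist (dist (gs n a) (gs n b)) 0 < \<delta>/2"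
        using gsl[unfolded lim_sequentially, rule_format, of "\<delta>/2"] dpos by simp
      then obtain N where "\<forall>n\<ge>N. dist (dist (gs n a) (gs n b)) 0 < \<delta>/2"
        by blast
      then show ?thesis using that by auto
    qed
    define g where "g = gs k"
    have gG: "g \<in> G" using gsG g_def by simp
    have gS: "\<And>y. y \<in> S1 \<Longrightarrow> g y \<in> S1" using HomS1_props(2)[OF subsetD[OF Gsub gG]] by blast
    have "uniformly_continuous_on S1 g"
      using gG Gsub HomS1_props(1) S1_compact compact_uniformly_continuous by blast
    then have "\<exists>d>0. \<forall>x\<in>S1. \<forall>x'\<in>S1. dist x' x < d \<longrightarrow> dist (g x') (g x) < \<delta>/2"
      unfolding uniformly_continuous_on_def using dpos by (meson half_gt_zero)
    then obtain \<rho> where rpos: "\<rho> > 0"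
      and rho: "\<And>p q. p \<in> S1 \<Longrightarrow> q \<in> S1 \<Longrightarrow> dist p q < \<rho> \<Longrightarrow> dist (g p) (g q) < \<delta>/2"
      by blast
    obtain N0 where N0: "inverse (real (Suc N0)) < \<rho>/2"
      using reals_Archimedean rpos half_gt_zero by blast
    obtain N1 where N1: "\<forall>n\<ge>N1. dist (C (r n)) a < \<rho>/2"
      using la rpos unfolding lim_sequentially by (meson half_gt_zero)
    obtain N2 where N2: "\<forall>n\<ge>N2. dist (H (r n) x) b < \<rho>"
      using lb rpos unfolding lim_sequentially by meson
    define n where "n = max N0 (max N1 N2)"
    have n1: "dist (C (r n)) a < \<rho>/2" using N1 n_def by simp
    have n2: "dist (H (r n) x) b < \<rho>" using N2 n_def by simp
    have n3: "n \<ge> N0" using n_def by simp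
    have rn: "r n \<ge> n" using r seq_suble by blast
    have small: "1 / real (Suc (r n)) < \<rho>/2"
    proof -
      have "1 / real (Suc (r n)) \<le> inverse (real (Suc N0))"
        using rn n3 by (simp add: inverse_eq_divide divide_left_mono frac_le)
      then show ?thesis using N0 by linarith
    qed
    show "\<exists>h\<in>G. \<exists>c\<in>S1. \<forall>u\<in>insert x F. dist (h u) c < \<delta>"
    proof (intro bexI ballI)
      show "g \<circ> H (r n) \<in> G" using Gcomp gG HG by blast
      show "g a \<in> S1" using gS aS by blast
      fix u assume u: "u \<in> insert x F"
      show "dist ((g \<circ> H (r n)) u) (g a) < \<delta>"
      proof (cases "u = x")
        case True
        have "dist (g (H (r n) x)) (g b) < \<delta>/2"
          using rho[OF HS[OF xS] bS n2] .
        moreover have "dist (g b) (g a) < \<delta>/2" using gk g_def by (simp add: dist_commute)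
        ultimately show ?thesis using True dist_triangle[of "g (H (r n) x)" "g a" "g b"] by simp
      next
        case False
        then have uF: "u \<in> F" using u by simp
        have "dist (H (r n) u) (C (r n)) < 1 / Suc (r n)" using HC[OF uF] .
        then have "dist (H (r n) u) a < \<rho>"
          using n1 small dist_triangle[of "H (r n) u" a "C (r n)"] by simp
        then have "dist (g (H (r n) u)) (g a) < \<delta>/2"
          using rho[OF HS aS] uF FS by blast
        moreover have "dist ((g \<circ> H (r n)) u) (g a) = dist (g (H (r n) u)) (g a)" by simp
        ultimately show ?thesis using zero_le_dist[of "g (H (r n) u)" "g a"] by linarith
      qed
    qed
  qed
qed



lemma S1_iff: "y \<in> S1 \<longleftrightarrow> cmod y = 1" unfolding S1_def by simp

lemma cmod_one_minus_sq: "cmod w = 1 \<Longrightarrow> (cmod (1 - w))^2 = 2 - 2 * Re w"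
proof -
  assume "cmod w = 1"
  then have "Re w ^ 2 + Im w ^ 2 = 1" using cmod_power2[of w] by simp
  moreover have "(cmod (1 - w))^2 = (1 - Re w)^2 + (Im w)^2" using cmod_power2[of "1 - w"] by simp
  ultimately show ?thesis by (simp add: power2_eq_square algebra_simps)
qed

lemma unit_decomp:
  assumes "cmod x = 1"
  shows "y = (y * cnj x) * x" and "cmod (y * cnj x) = cmod y"
proof -
  have "cnj x * x = 1"
    using assms complex_norm_square[of x] by (simp add: mult.commute)
  then show "y = (y * cnj x) * x" by (simp add: mult.assoc)
  show "cmod (y * cnj x) = cmod y" using assms by (simp add: norm_mult)
qed

lemma dist_unit_rot:
  assumes "cmod x = 1"
  shows "dist (w * x) x = cmod (1 - w)"
proof -
  have "w * x - x = (w - 1) * x" by (simp add: algebra_simps)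
  then have "dist (w * x) x = cmod (w - 1)" using assms by (simp add: dist_norm norm_mult)
  also have "\<dots> = cmod (1 - w)" by (simp add: norm_minus_commute)
  finally show ?thesis .
qed

lemma finite_slice:
  assumes xS: "x \<in> S1"
  shows "finite {y\<in>S1. dist y x = r}"
proof -
  define t where "t = 1 - r^2/2"
  define s where "s = sqrt (1 - t^2)"
  have "{y\<in>S1. dist y x = r} \<subseteq> {Complex t s * x, Complex t (-s) * x}"
  proof
    fix y assume y: "y \<in> {y\<in>S1. dist y x = r}"
    have cx: "cmod x = 1" using xS S1_iff by simp
    define w where "w = y * cnj x"
    have yw: "y = w * x" using unit_decomp(1)[OF cx] w_def by simp
    have cw: "cmod w = 1" using unit_decomp(2)[OF cx, of y] y S1_iff w_def by simp
    have "dist y x = cmod (1 - w)" using yw dist_unit_rot[OF cx] by simp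
    then have "r^2 = 2 - 2 * Re w" using y cmod_one_minus_sq[OF cw] by simp
    then have Rw: "Re w = t" unfolding t_def by linarith
    have "Re w ^ 2 + Im w ^ 2 = 1" using cw cmod_power2[of w] by simp
    then have "Im w ^ 2 = 1 - t^2" using Rw by simp
    then have "\<bar>Im w\<bar> = s" unfolding s_def by (metis real_sqrt_abs)
    then have "Im w = s \<or> Im w = - s" by linarith
    then have "w = Complex t s \<or> w = Complex t (-s)"
      using Rw complex_eq_iff by auto
    then show "y \<in> {Complex t s * x, Complex t (-s) * x}" using yw by auto
  qed
  then show ?thesis by (rule finite_subset) simp
qed

lemma cap_connected:
  assumes cS: "c \<in> S1" and dpos: "0 < \<delta>" and d1: "\<delta> \<le> 1"
  shows "connected (S1 - ball c \<delta>)"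
proof -
  define t where "t = 1 - \<delta>^2/2"
  have dd: "\<delta>^2 \<le> 1" using dpos d1 by (simp add: power_le_one)
  have d0: "0 \<le> \<delta>^2" by simp
  have t1: "t \<le> 1" and tm: "-1 \<le> t" using dd d0 unfolding t_def by linarith+
  define U where "U = (\<lambda>x. Complex x (sqrt (1 - x^2))) ` {-1..t}"
  define L where "L = (\<lambda>x. Complex x (- sqrt (1 - x^2))) ` {-1..t}"
  define D1 where "D1 = {w. cmod w = 1 \<and> Re w \<le> t}"
  have cU: "connected U" unfolding U_def
    by (intro connected_continuous_image connected_Icc continuous_intros)
  have cL: "connected L" unfolding L_def
    by (intro connected_continuous_image connected_Icc continuous_intros)
  have m1: "Complex (-1) 0 \<in> U \<inter> L" unfolding U_def L_def using tm
    by (auto intro!: image_eqI[where x="-1"])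
  have "D1 = U \<union> L"
  proof
    show "D1 \<subseteq> U \<union> L"
    proof
      fix w assume "w \<in> D1"
      then have cw: "cmod w = 1" and rw: "Re w \<le> t" unfolding D1_def by auto
      have "\<bar>Re w\<bar> \<le> 1" using abs_Re_le_cmod[of w] cw by simp
      then have rin: "Re w \<in> {-1..t}" using rw by auto
      have "Re w ^ 2 + Im w ^ 2 = 1" using cw cmod_power2[of w] by simp
      then have "Im w ^ 2 = 1 - Re w ^ 2" by simp
      then have "\<bar>Im w\<bar> = sqrt (1 - Re w ^ 2)" by (metis real_sqrt_abs)
      then have "Im w = sqrt (1 - Re w ^ 2) \<or> Im w = - sqrt (1 - Re w ^ 2)" by linarith
      then show "w \<in> U \<union> L"
      proof
        assume "Im w = sqrt (1 - Re w ^ 2)"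
        then have "w = Complex (Re w) (sqrt (1 - Re w ^ 2))" by (simp add: complex_eq_iff)
        then show ?thesis unfolding U_def using rin by blast
      next
        assume "Im w = - sqrt (1 - Re w ^ 2)"
        then have "w = Complex (Re w) (- sqrt (1 - Re w ^ 2))" by (simp add: complex_eq_iff)
        then show ?thesis unfolding L_def using rin by blast
      qed
    qed
    show "U \<union> L \<subseteq> D1"
    proof
      fix w assume "w \<in> U \<union> L"
      then obtain x e where xin: "x \<in> {-1..t}" and e: "e = sqrt (1 - x^2) \<or> e = - sqrt (1 - x^2)"
        and w: "w = Complex x e" unfolding U_def L_def by blast
      have "\<bar>x\<bar> \<le> 1" using xin t1 by auto
      then have "x^2 \<le> 1" by (simp add: abs_square_le_1)
      then have "e^2 = 1 - x^2" using e by auto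
      then have "cmod w ^ 2 = 1" using w cmod_power2[of w] by simp
      then have "cmod w = 1 \<or> cmod w = - 1" by (simp add: power2_eq_1_iff)
      then have "cmod w = 1" using norm_ge_zero[of w] by linarith
      then show "w \<in> D1" using w xin unfolding D1_def by simp
    qed
  qed
  then have cD1: "connected D1" using connected_Un[OF cU cL] m1 by auto
  have cx: "cmod c = 1" using cS S1_iff by simp
  have "S1 - ball c \<delta> = (\<lambda>w. w * c) ` D1"
  proof
    show "S1 - ball c \<delta> \<subseteq> (\<lambda>w. w * c) ` D1"
    proof
      fix y assume y: "y \<in> S1 - ball c \<delta>"
      define w where "w = y * cnj c"
      have yw: "y = w * c" using unit_decomp(1)[OF cx] w_def by simp
      have cw: "cmod w = 1" using unit_decomp(2)[OF cx, of y] y S1_iff w_def by simp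
      have "dist y c = cmod (1 - w)" using yw dist_unit_rot[OF cx] by simp
      then have "\<delta> \<le> cmod (1 - w)" using y by (simp add: dist_commute)
      then have "\<delta>^2 \<le> (cmod (1 - w))^2" using dpos by (simp add: power_mono)
      then have "Re w \<le> t" using cmod_one_minus_sq[OF cw] unfolding t_def by simp
      then show "y \<in> (\<lambda>w. w * c) ` D1" using yw cw unfolding D1_def by auto
    qed
    show "(\<lambda>w. w * c) ` D1 \<subseteq> S1 - ball c \<delta>"
    proof
      fix y assume "y \<in> (\<lambda>w. w * c) ` D1"
      then obtain w where w: "w \<in> D1" and yw: "y = w * c" by blast
      have cw: "cmod w = 1" and rw: "Re w \<le> t" using w unfolding D1_def by auto
      have "\<delta>^2 \<le> (cmod (1 - w))^2" using cmod_one_minus_sq[OF cw] rw unfolding t_def by simp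
      then have "\<delta> \<le> cmod (1 - w)" using power2_le_imp_le by fastforce
      moreover have "dist y c = cmod (1 - w)" using yw dist_unit_rot[OF cx] by simp
      moreover have "cmod y = 1" using yw cw cx by (simp add: norm_mult)
      ultimately show "y \<in> S1 - ball c \<delta>" using S1_iff by (simp add: dist_commute)
    qed
  qed
  moreover have "connected ((\<lambda>w. w * c) ` D1)"
    by (intro connected_continuous_image cD1 continuous_intros)
  ultimately show ?thesis by simp
qed



lemma space_S1_borel: "space S1_borel = S1"
  unfolding S1_borel_def by (simp add: space_restrict_space)

lemma eta_space: "sets \<eta> = sets S1_borel \<Longrightarrow> space \<eta> = S1"
  using sets_eq_imp_space_eq space_S1_borel by metis

lemma eta_open: "sets \<eta> = sets S1_borel \<Longrightarrow> open U \<Longrightarrow> S1 \<inter> U \<in> sets \<eta>"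
  unfolding S1_borel_def sets_restrict_space by auto

lemma small_punct:
  assumes P: "prob_space \<eta>" and SE: "sets \<eta> = sets S1_borel" and epos: "\<epsilon> > 0"
  shows "\<exists>r>0. measure \<eta> (S1 \<inter> (ball x r - {x})) < \<epsilon>"
proof -
  interpret prob_space \<eta> by (rule P)
  define A where "A n = S1 \<inter> (ball x (1 / Suc n) - {x})" for n :: nat
  have rA: "range A \<subseteq> sets \<eta>"
    unfolding A_def using eta_open[OF SE] by (auto intro!: open_delete)
  have dA: "decseq A"
  proof (rule decseq_SucI)
    fix n
    have "1 / real (Suc (Suc n)) \<le> 1 / real (Suc n)" by (simp add: frac_le)
    then show "A (Suc n) \<subseteq> A n" unfolding A_def by auto
  qed
  have eA: "(\<Inter>i. A i) = {}"
  proof (rule ccontr)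
    assume "(\<Inter>i. A i) \<noteq> {}"
    then obtain y where y: "\<And>i. y \<in> A i" by blast
    then have "y \<noteq> x" unfolding A_def by blast
    then have "dist x y > 0" by simp
    then obtain n where n: "inverse (real (Suc n)) < dist x y" using reals_Archimedean by blast
    have "dist x y < 1 / Suc n" using y[of n] unfolding A_def by simp
    then show False using n by (simp add: inverse_eq_divide)
  qed
  have "(\<lambda>n. measure \<eta> (A n)) \<longlonglongrightarrow> 0"
    using finite_Lim_measure_decseq[OF rA dA] eA by simp
  then obtain N where "\<forall>n\<ge>N. dist (measure \<eta> (A n)) 0 < \<epsilon>"
    using epos unfolding lim_sequentially by blast
  then have "measure \<eta> (A N) < \<epsilon>" by simp
  moreover have "(0::real) < 1 / Suc N" by simp
  ultimately show ?thesis unfolding A_def by blast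
qed

lemma partition_lemma:
  assumes P: "prob_space \<eta>" and SE: "sets \<eta> = sets S1_borel" and epos: "\<epsilon> > 0"
  shows "\<exists>F. finite F \<and> F \<subseteq> S1 \<and> (\<forall>C. connected C \<longrightarrow> C \<subseteq> S1 - F \<longrightarrow>
            (\<exists>M\<in>sets \<eta>. C \<subseteq> M \<and> measure \<eta> M < \<epsilon>))"
proof -
  have "\<forall>x. \<exists>r. r > 0 \<and> measure \<eta> (S1 \<inter> (ball x r - {x})) < \<epsilon>"
    using small_punct[OF P SE epos] by blast
  then obtain R where R: "\<And>x. R x > 0" and Rm: "\<And>x. measure \<eta> (S1 \<inter> (ball x (R x) - {x})) < \<epsilon>"
    using choice[of "\<lambda>x r. r > 0 \<and> measure \<eta> (S1 \<inter> (ball x r - {x})) < \<epsilon>"] by blast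
  have cov: "S1 \<subseteq> (\<Union>x\<in>S1. ball x (R x))"
  proof
    fix y assume "y \<in> S1"
    moreover have "y \<in> ball y (R y)" using R[of y] by simp
    ultimately show "y \<in> (\<Union>x\<in>S1. ball x (R x))" by blast
  qed
  obtain T where TS: "T \<subseteq> S1" and fT: "finite T" and Tcov: "S1 \<subseteq> (\<Union>x\<in>T. ball x (R x))"
    using compactE_image[OF S1_compact _ cov] by blast
  define F where "F = T \<union> (\<Union>x\<in>T. {y\<in>S1. dist y x = R x})"
  have fF: "finite F" unfolding F_def using fT finite_slice TS by blast
  have FS: "F \<subseteq> S1" unfolding F_def using TS by blast
  have "\<forall>C. connected C \<longrightarrow> C \<subseteq> S1 - F \<longrightarrow> (\<exists>M\<in>sets \<eta>. C \<subseteq> M \<and> measure \<eta> M < \<epsilon>)"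
  proof (intro allI impI)
    fix C assume cC: "connected C" and CF: "C \<subseteq> S1 - F"
    show "\<exists>M\<in>sets \<eta>. C \<subseteq> M \<and> measure \<eta> M < \<epsilon>"
    proof (cases "C = {}")
      case True
      have "{} \<in> sets \<eta>" by simp
      then show ?thesis using True epos by force
    next
      case False
      then obtain u where uC: "u \<in> C" by blast
      then have "u \<in> S1" using CF by blast
      then obtain x where xT: "x \<in> T" and ux: "u \<in> ball x (R x)" using Tcov by blast
      have xF: "x \<in> F" unfolding F_def using xT by blast
      have Csub: "C \<subseteq> ball x (R x) \<union> - cball x (R x)"
      proof
        fix y assume yC: "y \<in> C"
        then have "y \<in> S1" "y \<notin> F" using CF by auto
        then have "dist y x \<noteq> R x" unfolding F_def using xT by blast
        then show "y \<in> ball x (R x) \<union> - cball x (R x)" by (auto simp: dist_commute)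
      qed
      have "ball x (R x) \<inter> C = {} \<or> (- cball x (R x)) \<inter> C = {}"
      proof (rule connectedD[OF cC])
        show "open (ball x (R x))" by simp
        show "open (- cball x (R x))" by (simp add: open_Compl)
        show "ball x (R x) \<inter> - cball x (R x) \<inter> C = {}" by auto
        show "C \<subseteq> ball x (R x) \<union> - cball x (R x)" by (rule Csub)
      qed
      then have "- cball x (R x) \<inter> C = {}" using ux uC by blast
      then have "C \<subseteq> ball x (R x)" using Csub by blast
      then have "C \<subseteq> S1 \<inter> (ball x (R x) - {x})"
        using CF xF by blast
      moreover have "S1 \<inter> (ball x (R x) - {x}) \<in> sets \<eta>"
        using eta_open[OF SE] by (simp add: open_delete)
      ultimately show ?thesis using Rm[of x] by blast
    qed
  qed
  then show ?thesis using fF FS by blast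
qed

lemma contract_lemma:
  assumes gH: "g \<in> HomS1" and FS: "F \<subseteq> S1" and cS: "c \<in> S1"
    and dpos: "0 < \<delta>" and d1: "\<delta> \<le> 1" and gF: "\<forall>u\<in>F. dist (g u) c < \<delta>"
  shows "\<exists>C. connected C \<and> C \<subseteq> S1 - F \<and> (\<forall>v\<in>S1 - C. dist (g v) c < \<delta>)"
proof -
  obtain g' where hom: "homeomorphism S1 S1 g g'" using HomS1_props(3)[OF gH] by blast
  have g'g: "\<And>x. x \<in> S1 \<Longrightarrow> g' (g x) = x" and gg': "\<And>y. y \<in> S1 \<Longrightarrow> g (g' y) = y"
    and gS: "g ` S1 = S1" and g'S: "g' ` S1 = S1" and cg': "continuous_on S1 g'"
    using hom unfolding homeomorphism_def by auto
  define D where "D = S1 - ball c \<delta>"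
  define C where "C = g' ` D"
  have "connected C" unfolding C_def
    by (rule connected_continuous_image[OF continuous_on_subset[OF cg'] cap_connected[OF cS dpos d1, folded D_def]])
       (auto simp: D_def)
  moreover have "C \<subseteq> S1 - F"
  proof
    fix y assume "y \<in> C"
    then obtain d where dD: "d \<in> D" and y: "y = g' d" unfolding C_def by blast
    have dS: "d \<in> S1" using dD D_def by blast
    have yS: "y \<in> S1" using y g'S dS by blast
    have "y \<notin> F"
    proof
      assume "y \<in> F"
      then have "dist (g y) c < \<delta>" using gF by blast
      then have "dist d c < \<delta>" using y gg'[OF dS] by simp
      then show False using dD unfolding D_def by (simp add: dist_commute)
    qed
    then show "y \<in> S1 - F" using yS by blast
  qed
  moreover have "\<forall>v\<in>S1 - C. dist (g v) c < \<delta>"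
  proof
    fix v assume v: "v \<in> S1 - C"
    have gvS: "g v \<in> S1" using v gS by blast
    have "g v \<notin> D"
    proof
      assume "g v \<in> D"
      then have "g' (g v) \<in> C" unfolding C_def by blast
      then show False using v g'g by auto
    qed
    then show "dist (g v) c < \<delta>" using gvS unfolding D_def by (simp add: dist_commute)
  qed
  ultimately show ?thesis by blast
qed



lemma step_lemma:
  assumes prox: "proximal (Gamma_nu \<nu>)" and P: "prob_space \<eta>" and SE: "sets \<eta> = sets S1_borel"
    and e0: "0 < \<epsilon>" and e1: "\<epsilon> \<le> 1"
  shows "\<exists>g\<in>Gamma_nu \<nu>. \<exists>c\<in>S1. \<exists>M\<in>sets \<eta>. measure \<eta> M < \<epsilon> \<and> (\<forall>x\<in>S1 - M. dist (g x) c < \<epsilon>)"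
proof -
  obtain F where fF: "finite F" and FS: "F \<subseteq> S1"
    and FP: "\<And>C. connected C \<Longrightarrow> C \<subseteq> S1 - F \<Longrightarrow> (\<exists>M\<in>sets \<eta>. C \<subseteq> M \<and> measure \<eta> M < \<epsilon>)"
    using partition_lemma[OF P SE e0] by blast
  have Gsub: "Gamma_nu \<nu> \<subseteq> HomS1" using Gamma_HomS1 by blast
  have "\<forall>\<delta>>0. \<exists>h\<in>Gamma_nu \<nu>. \<exists>c\<in>S1. \<forall>u\<in>F. dist (h u) c < \<delta>"
    by (rule finite_prox[OF prox Gsub Gamma_comp Gamma_nu.Gamma_nu_id fF FS])
  then obtain h c where hG: "h \<in> Gamma_nu \<nu>" and cS: "c \<in> S1" and hF: "\<forall>u\<in>F. dist (h u) c < \<epsilon>"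
    using e0 by blast
  obtain C where cC: "connected C" and CF: "C \<subseteq> S1 - F" and Cc: "\<forall>v\<in>S1 - C. dist (h v) c < \<epsilon>"
    using contract_lemma[OF Gamma_HomS1[OF hG] FS cS e0 e1 hF] by blast
  obtain M where M: "M \<in> sets \<eta>" and CM: "C \<subseteq> M" and Mm: "measure \<eta> M < \<epsilon>"
    using FP[OF cC CF] by blast
  have "\<forall>x\<in>S1 - M. dist (h x) c < \<epsilon>" using Cc CM by blast
  then show ?thesis using hG cS M Mm by blast
qed

lemma weak_lemma:
  assumes P: "prob_space \<eta>" and SE: "sets \<eta> = sets S1_borel" and zS: "z \<in> S1"
    and GH: "\<And>n. G n \<in> HomS1" and M: "\<And>n. M n \<in> sets \<eta>" and Mm: "\<And>n. measure \<eta> (M n) < e n"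
    and close: "\<And>n x. x \<in> S1 \<Longrightarrow> x \<notin> M n \<Longrightarrow> dist (G n x) (c n) < e n"
    and el: "e \<longlonglongrightarrow> 0" and cz: "c \<longlonglongrightarrow> z"
  shows "weak_star_to_dirac (\<lambda>n. distr \<eta> S1_borel (G n)) z"
  unfolding weak_star_to_dirac_def
proof (intro allI impI)
  fix \<phi> :: "complex \<Rightarrow> real" assume c\<phi>: "continuous_on S1 \<phi>"
  interpret prob_space \<eta> by (rule P)
  have sp: "space \<eta> = S1" using eta_space[OF SE] .
  have \<phi>m: "\<phi> \<in> borel_measurable S1_borel"
    unfolding S1_borel_def by (rule borel_measurable_continuous_on_restrict[OF c\<phi>])
  have GS: "\<And>n x. x \<in> S1 \<Longrightarrow> G n x \<in> S1" using HomS1_props(2)[OF GH] by blast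
  have Gm: "\<And>n. G n \<in> measurable \<eta> S1_borel"
  proof -
    fix n
    have "G n \<in> measurable (restrict_space borel S1) (restrict_space borel S1)"
    proof (rule measurable_restrict_space2)
      show "G n \<in> space (restrict_space borel S1) \<rightarrow> S1"
        using GS by (auto simp: space_restrict_space)
      show "G n \<in> borel_measurable (restrict_space borel S1)"
        by (rule borel_measurable_continuous_on_restrict[OF HomS1_props(1)[OF GH]])
    qed
    then show "G n \<in> measurable \<eta> S1_borel"
      using measurable_cong_sets[OF SE refl, of S1_borel] unfolding S1_borel_def by simp
  qed
  have int_eq: "\<And>n. (\<integral>x. \<phi> x \<partial>distr \<eta> S1_borel (G n)) = (\<integral>x. \<phi> (G n x) \<partial>\<eta>)"
    by (rule integral_distr[OF Gm \<phi>m])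
  have "compact (\<phi> ` S1)" by (rule compact_continuous_image[OF c\<phi> S1_compact])
  then have "bounded (\<phi> ` S1)" by (rule compact_imp_bounded)
  then obtain B where B: "\<And>y. y \<in> S1 \<Longrightarrow> \<bar>\<phi> y\<bar> \<le> B" unfolding bounded_iff by auto
  have B0: "0 \<le> B" using B[OF zS] by simp
  have \<phi>Gm: "\<And>n. (\<lambda>x. \<phi> (G n x)) \<in> borel_measurable \<eta>"
    using measurable_compose[OF Gm \<phi>m] by blast
  have int1: "\<And>n. integrable \<eta> (\<lambda>x. \<phi> (G n x))"
  proof -
    fix n
    show "integrable \<eta> (\<lambda>x. \<phi> (G n x))"
    proof (rule integrable_const_bound[where B=B])
      show "AE x in \<eta>. norm (\<phi> (G n x)) \<le> B"
        using B GS sp by (intro AE_I2) auto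
      show "(\<lambda>x. \<phi> (G n x)) \<in> borel_measurable \<eta>" by (rule \<phi>Gm)
    qed
  qed
  show "(\<lambda>n. \<integral>x. \<phi> x \<partial>distr \<eta> S1_borel (G n)) \<longlonglongrightarrow> \<phi> z"
    unfolding lim_sequentially
  proof (intro allI impI)
    fix \<epsilon> :: real assume epos: "\<epsilon> > 0"
    have "\<exists>d>0. \<forall>y\<in>S1. dist y z < d \<longrightarrow> dist (\<phi> y) (\<phi> z) < \<epsilon>/2"
      using c\<phi>[unfolded continuous_on_iff, rule_format, OF zS, of "\<epsilon>/2"] epos by simp
    then obtain \<rho> where rpos: "\<rho> > 0" and rho: "\<And>y. y \<in> S1 \<Longrightarrow> dist y z < \<rho> \<Longrightarrow> dist (\<phi> y) (\<phi> z) < \<epsilon>/2"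
      by blast
    define k where "k = min (\<rho>/2) (\<epsilon> / (4*B+4))"
    have kpos: "k > 0" unfolding k_def using rpos epos B0 by simp
    obtain N1 where N1: "\<forall>n\<ge>N1. dist (c n) z < \<rho>/2"
      using cz[unfolded lim_sequentially, rule_format, of "\<rho>/2"] rpos by auto
    obtain N2 where N2: "\<forall>n\<ge>N2. dist (e n) 0 < k"
      using el[unfolded lim_sequentially, rule_format, of k] kpos by auto
    show "\<exists>N. \<forall>n\<ge>N. dist (\<integral>x. \<phi> x \<partial>distr \<eta> S1_borel (G n)) (\<phi> z) < \<epsilon>"
    proof (intro exI allI impI)
      fix n assume n: "n \<ge> max N1 N2"
      have cn: "dist (c n) z < \<rho>/2" using N1 n by simp
      have "\<bar>e n\<bar> < k" using N2 n by (simp add: dist_real_def)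
      then have en: "e n < k" by linarith
      define f where "f x = \<phi> (G n x) - \<phi> z" for x
      define g where "g x = \<epsilon>/2 + 2*B * indicator (M n) x" for x
      have intf: "integrable \<eta> f" unfolding f_def using int1[of n] by simp
      have gm: "g \<in> borel_measurable \<eta>" unfolding g_def using M[of n] by measurable
      have intg: "integrable \<eta> g"
      proof (rule integrable_const_bound[where B="\<epsilon>/2 + 2*B"])
        show "AE x in \<eta>. norm (g x) \<le> \<epsilon>/2 + 2*B"
          using B0 epos by (intro AE_I2) (auto simp: g_def indicator_def)
      qed (rule gm)
      have bnd: "\<And>x. x \<in> space \<eta> \<Longrightarrow> \<bar>f x\<bar> \<le> g x"
      proof -
        fix x assume "x \<in> space \<eta>"
        then have xS: "x \<in> S1" using sp by simp
        show "\<bar>f x\<bar> \<le> g x"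
        proof (cases "x \<in> M n")
          case True
          have "\<bar>f x\<bar> \<le> \<bar>\<phi> (G n x)\<bar> + \<bar>\<phi> z\<bar>" unfolding f_def by simp
          also have "\<dots> \<le> 2*B" using B[OF GS[OF xS], of n] B[OF zS] by linarith
          finally show ?thesis unfolding g_def using True epos by simp
        next
          case False
          have "dist (G n x) (c n) < e n" using close[OF xS False] .
          then have "dist (G n x) z < \<rho>"
            using cn en dist_triangle[of "G n x" z "c n"] unfolding k_def by simp
          then have "dist (\<phi> (G n x)) (\<phi> z) < \<epsilon>/2" using rho GS[OF xS] by blast
          then have "\<bar>f x\<bar> < \<epsilon>/2" unfolding f_def by (simp add: dist_real_def)
          then show ?thesis unfolding g_def using B0 False by simp
        qed
      qed
      have "\<bar>\<integral>x. f x \<partial>\<eta>\<bar> \<le> (\<integral>x. g x \<partial>\<eta>)"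
        by (rule integral_abs_bound_integral[OF intf intg bnd])
      also have "(\<integral>x. g x \<partial>\<eta>) = \<epsilon>/2 + 2*B * measure \<eta> (M n)"
      proof -
        have "M n \<inter> space \<eta> = M n" using sets.sets_into_space[OF M[of n]] by blast
        have ii: "integrable \<eta> (\<lambda>x. indicator (M n) x :: real)"
        proof (rule integrable_const_bound[where B=1])
          show "AE x in \<eta>. norm (indicator (M n) x :: real) \<le> 1"
            by (intro AE_I2) (auto simp: indicator_def)
        qed (rule borel_measurable_indicator[OF M[of n]])
        have "(\<integral>x. g x \<partial>\<eta>) = (\<integral>x. \<epsilon>/2 \<partial>\<eta>) + (\<integral>x. 2*B * indicator (M n) x \<partial>\<eta>)"
          unfolding g_def by (rule Bochner_Integration.integral_add) (auto intro: ii integrable_mult_right)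
        also have "\<dots> = \<epsilon>/2 + 2*B * measure \<eta> (M n)"
          using \<open>M n \<inter> space \<eta> = M n\<close> by (simp add: prob_space integral_mult_right_zero)
        finally show ?thesis .
      qed
      also have "\<dots> < \<epsilon>"
      proof -
        have "measure \<eta> (M n) \<le> k" using Mm[of n] en by simp
        then have "2*B * measure \<eta> (M n) \<le> 2*B * k" using B0 by (simp add: mult_left_mono)
        also have "\<dots> \<le> 2*B * (\<epsilon> / (4*B+4))"
        proof (rule mult_left_mono)
          show "k \<le> \<epsilon> / (4*B+4)" unfolding k_def by (rule min.cobounded2)
        qed (use B0 in simp)
        also have "\<dots> < \<epsilon>/2" using B0 epos by (simp add: field_simps)
        finally show ?thesis by simp
      qed
      finally have "\<bar>\<integral>x. f x \<partial>\<eta>\<bar> < \<epsilon>" .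
      moreover have "(\<integral>x. f x \<partial>\<eta>) = (\<integral>x. \<phi> (G n x) \<partial>\<eta>) - \<phi> z"
        unfolding f_def using int1[of n] by (simp add: prob_space)
      ultimately show "dist (\<integral>x. \<phi> x \<partial>distr \<eta> S1_borel (G n)) (\<phi> z) < \<epsilon>"
        using int_eq[of n] by (simp add: dist_real_def)
    qed
  qed
qed



theorem corollary2p7:
  fixes \<nu> :: "(complex \<Rightarrow> complex) measure" and \<eta> :: "complex measure"
  assumes "prob_space \<nu>"
    and "space \<nu> = HomS1" and "sets \<nu> = sets HomS1_borel"
    and "proximal (Gamma_nu \<nu>)" and "\<not> fixes_point (Gamma_nu \<nu>)"
    and "prob_space \<eta>" and "sets \<eta> = sets S1_borel"
    and "stationary \<nu> \<eta>"
  shows "\<exists>(g::nat \<Rightarrow> complex \<Rightarrow> complex) z. (\<forall>n. g n \<in> Gamma_nu \<nu>) \<and> z \<in> S1 \<and>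
           weak_star_to_dirac (\<lambda>n. distr \<eta> S1_borel (g n)) z"
proof -
  note prox = assms(4) and P = assms(6) and SE = assms(7)
  let ?Q = "\<lambda>n (p :: (complex \<Rightarrow> complex) \<times> complex \<times> complex set).
     fst p \<in> Gamma_nu \<nu> \<and> fst (snd p) \<in> S1 \<and> snd (snd p) \<in> sets \<eta> \<and>
     measure \<eta> (snd (snd p)) < 1 / real (Suc n) \<and>
     (\<forall>x\<in>S1 - snd (snd p). dist (fst p x) (fst (snd p)) < 1 / real (Suc n))"
  have "\<forall>n. \<exists>p. ?Q n p"
  proof
    fix n
    have a1: "(0::real) < 1 / real (Suc n)" by simp
    have a2: "1 / real (Suc n) \<le> 1" by simp
    obtain g where "g \<in> Gamma_nu \<nu>" and "\<exists>c\<in>S1. \<exists>M\<in>sets \<eta>. measure \<eta> M < 1 / real (Suc n) \<and> (\<forall>x\<in>S1 - M. dist (g x) c < 1 / real (Suc n))"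
      using step_lemma[OF prox P SE a1 a2] by blast
    then obtain c M where "g \<in> Gamma_nu \<nu>" "c \<in> S1" "M \<in> sets \<eta>"
      "measure \<eta> M < 1 / real (Suc n)" "\<forall>x\<in>S1 - M. dist (g x) c < 1 / real (Suc n)"
      by blast
    then have "?Q n (g, c, M)" by simp
    then show "\<exists>p. ?Q n p" by blast
  qed
  then obtain p where p: "\<And>n. ?Q n (p n)" by (metis choice)
  define g where "g n = fst (p n)" for n
  define c where "c n = fst (snd (p n))" for n
  define M where "M n = snd (snd (p n))" for n
  have gG: "\<And>n. g n \<in> Gamma_nu \<nu>" and cS: "\<And>n. c n \<in> S1" and MS: "\<And>n. M n \<in> sets \<eta>"
    and Mm: "\<And>n. measure \<eta> (M n) < 1 / real (Suc n)"
    and cl: "\<And>n x. x \<in> S1 \<Longrightarrow> x \<notin> M n \<Longrightarrow> dist (g n x) (c n) < 1 / real (Suc n)"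
    using p unfolding g_def c_def M_def by auto
  have "\<exists>l\<in>S1. \<exists>r. strict_mono r \<and> (c \<circ> r) \<longlonglongrightarrow> l"
    by (rule compact_imp_seq_compact[OF S1_compact, unfolded seq_compact_def, rule_format, of c, OF cS])
  then obtain z r where zS: "z \<in> S1" and r: "strict_mono r" and cz: "(c \<circ> r) \<longlonglongrightarrow> z"
    by blast
  have e0: "(\<lambda>n. 1 / real (Suc n)) \<longlonglongrightarrow> 0"
    using LIMSEQ_inverse_real_of_nat by (simp add: inverse_eq_divide)
  have el: "((\<lambda>n. 1 / real (Suc n)) \<circ> r) \<longlonglongrightarrow> 0"
    by (rule LIMSEQ_subseq_LIMSEQ[OF e0 r])
  have "weak_star_to_dirac (\<lambda>n. distr \<eta> S1_borel (g (r n))) z"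
  proof (rule weak_lemma[OF P SE zS, where M="\<lambda>n. M (r n)" and e="(\<lambda>n. 1 / real (Suc n)) \<circ> r" and c="c \<circ> r"])
    show "\<And>n. g (r n) \<in> HomS1" using gG Gamma_HomS1 by blast
    show "\<And>n. M (r n) \<in> sets \<eta>" using MS by blast
    show "\<And>n. measure \<eta> (M (r n)) < ((\<lambda>n. 1 / real (Suc n)) \<circ> r) n" using Mm by simp
    show "\<And>n x. x \<in> S1 \<Longrightarrow> x \<notin> M (r n) \<Longrightarrow> dist (g (r n) x) ((c \<circ> r) n) < ((\<lambda>n. 1 / real (Suc n)) \<circ> r) n"
      using cl by simp
  qed (rule el, rule cz)
  then show ?thesis
    by (intro exI[of _ "\<lambda>n. g (r n)"] exI[of _ z]) (use gG zS in auto)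
qed

end
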